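(* Let $r\geq 2$ and let $A$ be a complex $r$-matrix of order $n_1\times\cdots\times n_r$, with slices $A^{(k)}_s$ ($k\in[r]$, $s\in[n_k]$). Then \[ \|A\|_r^r\leq \max_{a_{i_1,\ldots,i_r}\neq 0}\,|A^{(1)}_{i_1}|_1\cdots|A^{(r)}_{i_r}|_1 , \] where the maximum is over all index tuples $(i_1,\ldots,i_r)\in[n_1]\times\cdots\times[n_r]$ with $a_{i_1,\ldots,i_r}\neq 0$.
   Context: An $r$-matrix $A$ of order $n_1\times\cdots\times n_r$ is a function on $[n_1]\times\cdots\times[n_r]$, with values $a_{i_1,\ldots,i_r}$. For $k\in[r]$ and $s\in[n_k]$, the slice $A^{(k)}_s$ is the $(r-1)$-matrix obtained from $A$ by fixing $i_k=s$; $|A^{(k)}_s|_1$ denotes the sum of the absolute values of its entries. The linear form of $A$ is $L_A(\mathbf{x}^{(1)},\ldots,\mathbf{x}^{(r)})=\sum_{i_1,\ldots,i_r}a_{i_1,\ldots,i_r}\overline{x^{(1)}_{i_1}}\cdots\overline{x^{(r)}_{i_r}}$ for $\mathbf{x}^{(k)}\in\mathbb{C}^{n_k}$. For real $p\geq1$, the spectral $p$-norm is $\|A\|_p=\max\{|L_A(\mathbf{x}^{(1)},\ldots,\mathbf{x}^{(r)})| : |\mathbf{x}^{(1)}|_p=\cdots=|\mathbf{x}^{(r)}|_p=1\}$, where $|\cdot|_p$ is the usual $\ell^p$ norm of a complex vector. *)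

theory Defs
  imports "HOL-Analysis.Analysis"
begin

text \<open>An r-matrix of order n_0 x ... x n_(r-1) (0-based indices) is a function
  A :: (nat \<Rightarrow> nat) \<Rightarrow> complex on the index tuples below; values outside are irrelevant.\<close>

definition idx :: "nat \<Rightarrow> (nat \<Rightarrow> nat) \<Rightarrow> (nat \<Rightarrow> nat) set" where
  "idx r n = PiE {..<r} (\<lambda>k. {..<n k})"

definition lpnorm :: "real \<Rightarrow> nat \<Rightarrow> (nat \<Rightarrow> complex) \<Rightarrow> real" where
  "lpnorm p m v = (\<Sum>j<m. cmod (v j) powr p) powr (1 / p)"

definition linform :: "nat \<Rightarrow> (nat \<Rightarrow> nat) \<Rightarrow> ((nat \<Rightarrow> nat) \<Rightarrow> complex)
    \<Rightarrow> (nat \<Rightarrow> nat \<Rightarrow> complex) \<Rightarrow> complex" where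
  "linform r n A x = (\<Sum>i\<in>idx r n. A i * (\<Prod>k<r. cnj (x k (i k))))"

definition spec_norm :: "real \<Rightarrow> nat \<Rightarrow> (nat \<Rightarrow> nat) \<Rightarrow> ((nat \<Rightarrow> nat) \<Rightarrow> complex) \<Rightarrow> real" where
  "spec_norm p r n A =
     Sup {cmod (linform r n A x) | x. \<forall>k<r. lpnorm p (n k) (x k) = 1}"

definition slice_norm :: "nat \<Rightarrow> (nat \<Rightarrow> nat) \<Rightarrow> ((nat \<Rightarrow> nat) \<Rightarrow> complex) \<Rightarrow> nat \<Rightarrow> nat \<Rightarrow> real" where
  "slice_norm r n A k s = (\<Sum>i\<in>{i \<in> idx r n. i k = s}. cmod (A i))"

end

theory Submission
  imports Defs
begin

lemma amgm:
  fixes z :: "nat \<Rightarrow> real"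
  assumes "r > 0" "\<And>k. k < r \<Longrightarrow> z k \<ge> 0"
  shows "(\<Prod>k<r. z k) \<le> (\<Sum>k<r. z k ^ r) / r"
proof -
  have "(\<Prod>k<r. z k ^ r) powr (1 / card {..<r}) \<le> (\<Sum>k<r. z k ^ r / card {..<r})"
    by (rule arith_geom_mean) (use assms in auto)
  moreover have "(\<Prod>k<r. z k ^ r) = (\<Prod>k<r. z k) ^ r" by (simp add: prod_power_distrib)
  moreover have "((\<Prod>k<r. z k) ^ r) powr (1 / r) = (\<Prod>k<r. z k)"
  proof -
    have nn: "(\<Prod>k<r. z k) \<ge> 0" using assms by (intro prod_nonneg) auto
    have "((\<Prod>k<r. z k) ^ r) = (\<Prod>k<r. z k) powr real r"
      using powr_realpow'[OF nn] assms by simp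
    then show ?thesis using nn assms by (simp add: powr_powr)
  qed
  ultimately show ?thesis by (simp add: sum_divide_distrib)
qed

lemma sumpow1:
  fixes p :: nat and v :: "nat \<Rightarrow> complex"
  assumes "p > 0" "lpnorm (real p) m v = 1"
  shows "(\<Sum>j<m. cmod (v j) ^ p) = 1"
proof -
  let ?S = "\<Sum>j<m. cmod (v j) powr real p"
  have S0: "?S \<ge> 0" by (simp add: sum_nonneg)
  have "?S powr (1 / real p) = 1" using assms unfolding lpnorm_def by simp
  then have "(?S powr (1 / real p)) powr real p = 1" by simp
  then have "?S = 1" using S0 assms by (simp add: powr_powr)
  moreover have "\<And>j. cmod (v j) powr real p = cmod (v j) ^ p"
    using powr_realpow' assms by simp
  ultimately show ?thesis by simp
qed

theorem theorem1:
  fixes r :: nat and n :: "nat \<Rightarrow> nat" and A :: "(nat \<Rightarrow> nat) \<Rightarrow> complex"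
  assumes "r \<ge> 2" and "\<forall>k<r. n k \<ge> 1"
  shows "spec_norm (real r) r n A ^ r \<le>
    Max (insert 0 {(\<Prod>k<r. slice_norm r n A k (i k)) | i. i \<in> idx r n \<and> A i \<noteq> 0})"
proof -
  define M where "M = Max (insert 0 {(\<Prod>k<r. slice_norm r n A k (i k)) | i. i \<in> idx r n \<and> A i \<noteq> 0})"
  define s where "s = slice_norm r n A"
  have fidx: "finite (idx r n)" unfolding idx_def by (simp add: finite_PiE)
  have fin: "finite {(\<Prod>k<r. slice_norm r n A k (i k)) | i. i \<in> idx r n \<and> A i \<noteq> 0}"
  proof -
    have "{(\<Prod>k<r. slice_norm r n A k (i k)) | i. i \<in> idx r n \<and> A i \<noteq> 0}
        \<subseteq> (\<lambda>i. \<Prod>k<r. slice_norm r n A k (i k)) ` idx r n" by auto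
    then show ?thesis using fidx finite_subset by blast
  qed
  have M0: "M \<ge> 0" unfolding M_def using fin by simp
  have MP: "(\<Prod>k<r. s k (i k)) \<le> M" if "i \<in> idx r n" "A i \<noteq> 0" for i
    unfolding M_def s_def using fin that by (intro Max_ge) auto
  have r0: "r > 0" using assms by simp
  have sge: "s k (i k) \<ge> cmod (A i)" if "i \<in> idx r n" for i k
    unfolding s_def slice_norm_def
    by (rule member_le_sum) (use that fidx in auto)
  have s0: "s k t \<ge> 0" for k t unfolding s_def slice_norm_def by (simp add: sum_nonneg)
  have bound: "cmod (linform r n A x) \<le> M powr (1 / r)"
    if xn: "\<forall>k<r. lpnorm (real r) (n k) (x k) = 1" for x
  proof -
    define y where "y k t = cmod (x k t)" for k t
    have y0: "y k t \<ge> 0" for k t unfolding y_def by simp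
    have yr: "(\<Sum>t<n k. y k t ^ r) = 1" if "k < r" for k
      unfolding y_def using sumpow1[OF r0] xn that by blast
    have step1: "cmod (linform r n A x) \<le> (\<Sum>i\<in>idx r n. cmod (A i) * (\<Prod>k<r. y k (i k)))"
      unfolding linform_def y_def
      by (rule order_trans[OF norm_sum]) (simp add: norm_mult prod_norm[symmetric] complex_mod_cnj del: prod_norm)
    have step2: "cmod (A i) * (\<Prod>k<r. y k (i k)) \<le>
        M powr (1 / r) / r * (cmod (A i) * (\<Sum>k<r. y k (i k) ^ r / s k (i k)))"
      if iI: "i \<in> idx r n" for i
    proof (cases "A i = 0")
      case True then show ?thesis by simp
    next
      case False
      define P where "P = (\<Prod>k<r. s k (i k))"
      have spos: "s k (i k) > 0" for k using sge[OF iI, of k] False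
        by (metis norm_le_zero_iff not_le order_trans)
      have Ppos: "P > 0" unfolding P_def using spos by (simp add: prod_pos)
      define c where "c k = P powr (1 / r) / s k (i k)" for k
      have cpos: "c k > 0" for k unfolding c_def using Ppos spos[of k] by (metis divide_pos_pos powr_gt_zero less_irrefl)
      have prodc: "(\<Prod>k<r. c k) = 1"
      proof -
        have "(\<Prod>k<r. c k) = (\<Prod>k<r. P powr (1 / r)) / P"
          unfolding c_def P_def by (simp add: prod_dividef)
        also have "(\<Prod>k<r. P powr (1 / r)) = (P powr (1 / r)) powr real r"
          using powr_realpow[of "P powr (1 / r)" r] Ppos by simp
        also have "\<dots> = P" using r0 Ppos by (simp add: powr_powr)
        finally show ?thesis using Ppos by simp
      qed
      define z where "z k = y k (i k) * c k powr (1 / r)" for k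
      have "(\<Prod>k<r. z k) = (\<Prod>k<r. y k (i k)) * (\<Prod>k<r. c k) powr (1 / r)"
        unfolding z_def by (simp add: prod.distrib prod_powr_distrib)
      then have pz: "(\<Prod>k<r. z k) = (\<Prod>k<r. y k (i k))" using prodc by simp
      have zr: "z k ^ r = y k (i k) ^ r * c k" for k
      proof -
        have "(c k powr (1 / r)) ^ r = c k"
          using powr_realpow[of "c k powr (1 / r)" r] cpos[of k] r0 by (simp add: powr_powr)
        then show ?thesis unfolding z_def by (simp add: power_mult_distrib)
      qed
      have "(\<Prod>k<r. y k (i k)) \<le> (\<Sum>k<r. z k ^ r) / r"
        using amgm[OF r0, of z] pz unfolding z_def using y0 cpos
        by (simp add: less_imp_le)
      also have "(\<Sum>k<r. z k ^ r) = P powr (1 / r) * (\<Sum>k<r. y k (i k) ^ r / s k (i k))"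
        unfolding zr c_def by (simp add: sum_distrib_left mult.commute)
      also have "\<dots> \<le> M powr (1 / r) * (\<Sum>k<r. y k (i k) ^ r / s k (i k))"
        using MP[OF iI False, folded P_def] Ppos s0 y0
        by (intro mult_right_mono powr_mono2 sum_nonneg) (auto simp: s_def)
      finally have "(\<Prod>k<r. y k (i k)) \<le> M powr (1 / r) * (\<Sum>k<r. y k (i k) ^ r / s k (i k)) / r"
        using r0 by (simp add: divide_right_mono)
      then have "cmod (A i) * (\<Prod>k<r. y k (i k)) \<le> cmod (A i) * (M powr (1 / r) * (\<Sum>k<r. y k (i k) ^ r / s k (i k)) / r)"
        by (intro mult_left_mono) auto
      then show ?thesis
        by (simp add: mult_ac)
    qed
    have step3: "(\<Sum>i\<in>idx r n. cmod (A i) * (\<Sum>k<r. y k (i k) ^ r / s k (i k))) \<le> r"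
    proof -
      have "(\<Sum>i\<in>idx r n. cmod (A i) * (\<Sum>k<r. y k (i k) ^ r / s k (i k)))
          = (\<Sum>k<r. \<Sum>i\<in>idx r n. cmod (A i) * (y k (i k) ^ r / s k (i k)))"
        by (simp add: sum_distrib_left sum.swap[of _ "idx r n"])
      also have "\<dots> \<le> (\<Sum>k<r. 1)"
      proof (rule sum_mono)
        fix k assume k: "k \<in> {..<r}"
        have img: "(\<lambda>i. i k) ` idx r n \<subseteq> {..<n k}" using k unfolding idx_def by (auto simp: PiE_def)
        have "(\<Sum>i\<in>idx r n. cmod (A i) * (y k (i k) ^ r / s k (i k)))
            = (\<Sum>t<n k. \<Sum>i\<in>{i \<in> idx r n. i k = t}. cmod (A i) * (y k (i k) ^ r / s k (i k)))"
          by (rule sum.group[OF fidx _ img, symmetric]) simp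
        also have "\<dots> = (\<Sum>t<n k. s k t * (y k t ^ r / s k t))"
        proof (intro sum.cong refl)
          fix t
          have "(\<Sum>i\<in>{i \<in> idx r n. i k = t}. cmod (A i) * (y k (i k) ^ r / s k (i k)))
              = (\<Sum>i\<in>{i \<in> idx r n. i k = t}. cmod (A i) * (y k t ^ r / s k t))"
            by (rule sum.cong) auto
          also have "\<dots> = (\<Sum>i\<in>{i \<in> idx r n. i k = t}. cmod (A i)) * (y k t ^ r / s k t)"
            by (rule sum_distrib_right[symmetric])
          also have "\<dots> = s k t * (y k t ^ r / s k t)" unfolding s_def slice_norm_def ..
          finally show "(\<Sum>i\<in>{i \<in> idx r n. i k = t}. cmod (A i) * (y k (i k) ^ r / s k (i k)))
              = s k t * (y k t ^ r / s k t)" .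
        qed
        also have "\<dots> \<le> (\<Sum>t<n k. y k t ^ r)"
        proof (rule sum_mono)
          fix t show "s k t * (y k t ^ r / s k t) \<le> y k t ^ r"
            using y0[of k t] s0[of k t] by (cases "s k t = 0") auto
        qed
        also have "\<dots> = 1" using yr k by simp
        finally show "(\<Sum>i\<in>idx r n. cmod (A i) * (y k (i k) ^ r / s k (i k))) \<le> 1" .
      qed
      finally show ?thesis by simp
    qed
    have "cmod (linform r n A x) \<le> (\<Sum>i\<in>idx r n. M powr (1 / r) / r * (cmod (A i) * (\<Sum>k<r. y k (i k) ^ r / s k (i k))))"
    proof -
      have "(\<Sum>i\<in>idx r n. cmod (A i) * (\<Prod>k<r. y k (i k))) \<le> (\<Sum>i\<in>idx r n. M powr (1 / r) / r * (cmod (A i) * (\<Sum>k<r. y k (i k) ^ r / s k (i k))))"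
        by (rule sum_mono) (rule step2)
      then show ?thesis using step1 by linarith
    qed
    also have "\<dots> = M powr (1 / r) / r * (\<Sum>i\<in>idx r n. cmod (A i) * (\<Sum>k<r. y k (i k) ^ r / s k (i k)))"
      by (simp add: sum_distrib_left)
    also have "\<dots> \<le> M powr (1 / r) / r * r"
      using step3 by (intro mult_left_mono) auto
    also have "\<dots> = M powr (1 / r)" using r0 by simp
    finally show ?thesis .
  qed
  define X where "X = {cmod (linform r n A x) | x. \<forall>k<r. lpnorm (real r) (n k) (x k) = 1}"
  define e where "e = (\<lambda>(k::nat) (t::nat). if t = 0 then (1::complex) else 0)"
  have "\<forall>k<r. lpnorm (real r) (n k) (e k) = 1"
  proof (intro allI impI)
    fix k assume "k < r"
    then have nk: "0 \<in> {..<n k}" using assms by auto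
    have "(\<Sum>j<n k. cmod (e k j) powr real r) = (\<Sum>j<n k. if j = 0 then 1 else 0)"
      using r0 by (intro sum.cong) (auto simp: e_def)
    also have "\<dots> = 1" using nk by (simp add: sum.delta)
    finally show "lpnorm (real r) (n k) (e k) = 1" unfolding lpnorm_def by simp
  qed
  then have ex: "cmod (linform r n A e) \<in> X" unfolding X_def by blast
  have bdd: "bdd_above X" unfolding X_def bdd_above_def using bound by blast
  have supub: "Sup X \<le> M powr (1 / r)"
    using ex bound by (intro cSup_least) (auto simp: X_def)
  have sup0: "Sup X \<ge> 0"
    using cSup_upper[OF ex bdd] by (meson norm_ge_zero order_trans)
  have "spec_norm (real r) r n A ^ r = Sup X ^ r" unfolding spec_norm_def X_def by simp
  also have "\<dots> \<le> (M powr (1 / r)) ^ r" using sup0 supub by (intro power_mono) auto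
  also have "\<dots> = M"
  proof (cases "M = 0")
    case True then show ?thesis using r0 by simp
  next
    case False
    then show ?thesis using M0 r0 powr_realpow[of "M powr (1 / r)" r] by (simp add: powr_powr)
  qed
  finally show ?thesis unfolding M_def .
qed

end
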